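(* Let $X$ be a Banach space with a transfinite basis $(x_\alpha)_{\alpha<\gamma}$ such that for all disjoint intervals $I,J$ of $\gamma$ the spaces $X_I$ and $X_J$ are totally incomparable. Then for every closed infinite-dimensional subspace $Y$ of $X$ and every $\varepsilon>0$ there exist normalized sequences $(y_n)_n$ and $(z_n)_n$ such that $(y_n)_n\subseteq Y$, $(z_n)_n$ is a block sequence of $(x_\alpha)_{\alpha<\gamma}$, and $\sum_n\|y_n-z_n\|<\varepsilon$.
   Context: A family $(x_\alpha)_{\alpha<\gamma}$ in a Banach space $X$ is a transfinite basis if its closed linear span is $X$ and there is $C\ge1$ such that for every interval $I$ of $\gamma$ the map $\sum_{\alpha}\lambda_\alpha x_\alpha\mapsto\sum_{\alpha\in I}\lambda_\alpha x_\alpha$ (on finite sums) extends to a bounded projection $P_I$ of norm at most $C$. $X_I=\overline{\langle x_\alpha\rangle_{\alpha\in I}}$. A block sequence of $(x_\alpha)$ is a sequence of finitely supported vectors (with respect to the biorthogonal functionals) with $\max\mathrm{supp}\,z_n<\min\mathrm{supp}\,z_{n+1}$. Two Banach spaces are totally incomparable if no infinite-dimensional closed subspace of one is isomorphic to an infinite-dimensional closed subspace of the other. *)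

theory Defs
  imports "HOL-Analysis.Analysis"
begin

text \<open>Intervals of the well-ordered index set (the ordinal gamma is represented by a
  well-ordered index type 'i; an interval is an order-convex subset).\<close>
definition is_interval_wo :: "'i::wellorder set \<Rightarrow> bool" where
  "is_interval_wo I \<longleftrightarrow> (\<forall>a b c. a \<in> I \<longrightarrow> c \<in> I \<longrightarrow> a \<le> b \<longrightarrow> b \<le> c \<longrightarrow> b \<in> I)"

definition transfinite_basis :: "('i::wellorder \<Rightarrow> 'a::banach) \<Rightarrow> bool" where
  "transfinite_basis x \<longleftrightarrow>
     (\<forall>\<alpha>. x \<alpha> \<noteq> 0) \<and>
     closure (span (range x)) = UNIV \<and>
     (\<exists>C\<ge>1. \<forall>I. is_interval_wo I \<longrightarrow>
        (\<exists>P. bounded_linear P \<and> (\<forall>v. P (P v) = P v) \<and> (\<forall>v. norm (P v) \<le> C * norm v) \<and>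
             (\<forall>F c. finite F \<longrightarrow>
                 P (\<Sum>\<alpha>\<in>F. c \<alpha> *\<^sub>R x \<alpha>) = (\<Sum>\<alpha>\<in>F \<inter> I. c \<alpha> *\<^sub>R x \<alpha>))))"

definition subsp :: "('i \<Rightarrow> 'a::real_normed_vector) \<Rightarrow> 'i set \<Rightarrow> 'a set" where
  "subsp x I = closure (span (x ` I))"

definition infinite_dimensional :: "'a::real_vector set \<Rightarrow> bool" where
  "infinite_dimensional Y \<longleftrightarrow> \<not> (\<exists>B. finite B \<and> Y \<subseteq> span B)"

definition isomorphic_subspaces :: "'a::real_normed_vector set \<Rightarrow> 'a set \<Rightarrow> bool" where
  "isomorphic_subspaces U V \<longleftrightarrow>
     (\<exists>T c d. 0 < c \<and> bij_betw T U V \<and>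
        (\<forall>u\<in>U. \<forall>v\<in>U. T (u + v) = T u + T v) \<and>
        (\<forall>u\<in>U. \<forall>r. T (r *\<^sub>R u) = r *\<^sub>R T u) \<and>
        (\<forall>u\<in>U. c * norm u \<le> norm (T u) \<and> norm (T u) \<le> d * norm u))"

definition totally_incomparable :: "'a::real_normed_vector set \<Rightarrow> 'a set \<Rightarrow> bool" where
  "totally_incomparable A B \<longleftrightarrow>
     (\<forall>U V. subspace U \<and> closed U \<and> U \<subseteq> A \<and> infinite_dimensional U \<and>
            subspace V \<and> closed V \<and> V \<subseteq> B \<and> infinite_dimensional V
            \<longrightarrow> \<not> isomorphic_subspaces U V)"

definition biorth :: "('i \<Rightarrow> 'a::real_normed_vector) \<Rightarrow> 'i \<Rightarrow> 'a \<Rightarrow> real" where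
  "biorth x \<alpha> = (THE f. bounded_linear f \<and> (\<forall>\<beta>. f (x \<beta>) = (if \<beta> = \<alpha> then 1 else 0)))"

definition supp_b :: "('i \<Rightarrow> 'a::real_normed_vector) \<Rightarrow> 'a \<Rightarrow> 'i set" where
  "supp_b x v = {\<alpha>. biorth x \<alpha> v \<noteq> 0}"

definition block_sequence :: "('i::wellorder \<Rightarrow> 'a::real_normed_vector) \<Rightarrow> (nat \<Rightarrow> 'a) \<Rightarrow> bool" where
  "block_sequence x z \<longleftrightarrow>
     (\<forall>n. finite (supp_b x (z n))) \<and>
     (\<forall>n. Max (supp_b x (z n)) < Min (supp_b x (z (Suc n))))"

end

theory Submission
  imports Defs
begin


definition okg :: "'a::real_normed_vector \<Rightarrow> ('a \<times> real) set \<Rightarrow> bool" where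
  "okg x0 G \<longleftrightarrow> (\<forall>a s b t. (a,s)\<in>G \<longrightarrow> (b,t)\<in>G \<longrightarrow> (a+b, s+t)\<in>G) \<and>
     (\<forall>a s r. (a,s)\<in>G \<longrightarrow> (r *\<^sub>R a, r * s)\<in>G) \<and>
     (\<forall>a s t. (a,s)\<in>G \<longrightarrow> (a,t)\<in>G \<longrightarrow> s=t) \<and>
     (\<forall>a s. (a,s)\<in>G \<longrightarrow> s \<le> norm a) \<and> (x0, norm x0) \<in> G"

lemma okgD:
  assumes "okg x0 G"
  shows okg_add: "(a,s)\<in>G \<Longrightarrow> (b,t)\<in>G \<Longrightarrow> (a+b, s+t)\<in>G"
    and okg_scl: "(a,s)\<in>G \<Longrightarrow> (r *\<^sub>R a, r * s)\<in>G"
    and okg_fn: "(a,s)\<in>G \<Longrightarrow> (a,t)\<in>G \<Longrightarrow> s=t"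
    and okg_dom: "(a,s)\<in>G \<Longrightarrow> s \<le> norm a"
    and okg_x0: "(x0, norm x0) \<in> G"
  using assms unfolding okg_def by blast+

lemma okg_chain:
  assumes "C \<noteq> {}" "subset.chain {G. okg x0 G} C"
  shows "okg x0 (\<Union>C)"
proof -
  have C: "\<And>G. G \<in> C \<Longrightarrow> okg x0 G" using assms(2) unfolding subset.chain_def by auto
  have cmp: "\<And>G1 G2. G1 \<in> C \<Longrightarrow> G2 \<in> C \<Longrightarrow> G1 \<subseteq> G2 \<or> G2 \<subseteq> G1"
    using assms(2) unfolding subset.chain_def by auto
  have two: "\<exists>G\<in>C. p \<in> G \<and> q \<in> G" if pq: "p \<in> \<Union>C" "q \<in> \<Union>C" for p q
  proof -
    obtain G1 G2 where "G1 \<in> C" "G2 \<in> C" "p \<in> G1" "q \<in> G2" using pq by blast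
    then show ?thesis using cmp[of G1 G2] by blast
  qed
  show ?thesis unfolding okg_def
  proof (intro conjI allI impI)
    fix a s b t assume "(a,s) \<in> \<Union>C" "(b,t) \<in> \<Union>C"
    then obtain G where "G\<in>C" "(a,s)\<in>G" "(b,t)\<in>G" using two by blast
    then show "(a+b,s+t) \<in> \<Union>C" using okg_add[OF C] by blast
  next
    fix a s r assume "(a,s) \<in> \<Union>C"
    then obtain G where "G\<in>C" "(a,s)\<in>G" by blast
    then show "(r *\<^sub>R a, r * s) \<in> \<Union>C" using okg_scl[OF C] by blast
  next
    fix a s t assume "(a,s) \<in> \<Union>C" "(a,t) \<in> \<Union>C"
    then obtain G where "G\<in>C" "(a,s)\<in>G" "(a,t)\<in>G" using two by blast
    then show "s = t" using okg_fn[OF C] by blast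
  next
    fix a s assume "(a,s) \<in> \<Union>C"
    then obtain G where "G\<in>C" "(a,s)\<in>G" by blast
    then show "s \<le> norm a" using okg_dom[OF C] by blast
  next
    obtain G where "G \<in> C" using assms(1) by blast
    then show "(x0, norm x0) \<in> \<Union>C" using okg_x0[OF C] by blast
  qed
qed

lemma okg_extend:
  assumes ok: "okg x0 M" and y: "y \<notin> fst ` M"
  shows "\<exists>M'. okg x0 M' \<and> M \<subseteq> M' \<and> M' \<noteq> M"
proof -
  note add = okg_add[OF ok] and scl = okg_scl[OF ok] and fnc = okg_fn[OF ok]
   and dom = okg_dom[OF ok] and x0 = okg_x0[OF ok]
  have z: "(0,0) \<in> M" using scl[OF x0, of 0] by simp
  define S where "S = {s - norm (a - y) | a s. (a,s) \<in> M}"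
  define c where "c = Sup S"
  have key: "s - norm (a - y) \<le> norm (b + y) - t" if "(a,s)\<in>M" "(b,t)\<in>M" for a s b t
  proof -
    have "s + t \<le> norm (a + b)" using dom[OF add[OF that]] .
    also have "\<dots> = norm ((a - y) + (b + y))" by (simp add: algebra_simps)
    also have "\<dots> \<le> norm (a - y) + norm (b + y)" by (rule norm_triangle_ineq)
    finally show ?thesis by simp
  qed
  have Sne: "S \<noteq> {}" using z unfolding S_def by blast
  have bdd: "bdd_above S" unfolding S_def bdd_above_def using key z by blast
  have c_up: "s - norm (a - y) \<le> c" if "(a,s)\<in>M" for a s
    unfolding c_def using that by (intro cSup_upper[OF _ bdd]) (auto simp: S_def)
  have c_lo: "c \<le> norm (b + y) - t" if "(b,t)\<in>M" for b t
    unfolding c_def using key[OF _ that] Sne by (intro cSup_least) (auto simp: S_def)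
  define M' where "M' = {(a + r *\<^sub>R y, s + r * c) | a s r. (a,s) \<in> M}"
  have mM': "(a + r *\<^sub>R y, s + r * c) \<in> M'" if "(a,s) \<in> M" for a s r
    unfolding M'_def using that by blast
  have ok': "okg x0 M'" unfolding okg_def
  proof (intro conjI allI impI)
    fix a s b t assume "(a,s) \<in> M'" "(b,t) \<in> M'"
    then obtain a1 s1 r1 a2 s2 r2 where "(a1,s1)\<in>M" "(a2,s2)\<in>M" and
      e: "a = a1 + r1 *\<^sub>R y" "s = s1 + r1*c" "b = a2 + r2 *\<^sub>R y" "t = s2 + r2*c"
      unfolding M'_def by blast
    then have "(a1+a2, s1+s2) \<in> M" using add by blast
    moreover have "a + b = (a1+a2) + (r1+r2) *\<^sub>R y" "s + t = (s1+s2) + (r1+r2)*c"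
      using e by (auto simp: algebra_simps)
    ultimately show "(a+b, s+t) \<in> M'" using mM' by metis
  next
    fix a s r assume "(a,s) \<in> M'"
    then obtain a1 s1 r1 where "(a1,s1)\<in>M" and
      e: "a = a1 + r1 *\<^sub>R y" "s = s1 + r1*c" unfolding M'_def by blast
    then have "(r *\<^sub>R a1, r * s1) \<in> M" using scl by blast
    moreover have "r *\<^sub>R a = r *\<^sub>R a1 + (r*r1) *\<^sub>R y" "r * s = r * s1 + (r*r1)*c"
      using e by (auto simp: algebra_simps)
    ultimately show "(r *\<^sub>R a, r * s) \<in> M'" using mM' by metis
  next
    fix a s t assume "(a,s) \<in> M'" "(a,t) \<in> M'"
    then obtain a1 s1 r1 a2 s2 r2 where m1: "(a1,s1)\<in>M" and m2: "(a2,s2)\<in>M" and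
      e: "a = a1 + r1 *\<^sub>R y" "s = s1 + r1*c" "a = a2 + r2 *\<^sub>R y" "t = s2 + r2*c"
      unfolding M'_def by blast
    have d: "(a2 - a1, s2 - s1) \<in> M"
      using add[OF m2 scl[OF m1, of "-1"]] by simp
    have r: "r1 = r2"
    proof (rule ccontr)
      assume "r1 \<noteq> r2"
      have "(r1 - r2) *\<^sub>R y = a2 - a1" using e by (simp add: algebra_simps)
      then have "(1/(r1-r2)) *\<^sub>R ((r1 - r2) *\<^sub>R y) = (1/(r1-r2)) *\<^sub>R (a2 - a1)" by simp
      then have "y = (1/(r1-r2)) *\<^sub>R (a2 - a1)" using \<open>r1 \<noteq> r2\<close> by simp
      then have "(y, (1/(r1-r2)) * (s2 - s1)) \<in> M" using scl[OF d, of "1/(r1-r2)"] by simp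
      then show False using y by force
    qed
    then have "a1 = a2" using e by simp
    then have "s1 = s2" using fnc m1 m2 by blast
    then show "s = t" using e r by simp
  next
    fix a s assume "(a,s) \<in> M'"
    then obtain a1 s1 r where m: "(a1,s1)\<in>M" and
      e: "a = a1 + r *\<^sub>R y" "s = s1 + r*c" unfolding M'_def by blast
    consider "r = 0" | "r > 0" | "r < 0" by linarith
    then show "s \<le> norm a"
    proof cases
      case 1 then show ?thesis using dom[OF m] e by simp
    next
      case 2
      have "c \<le> norm ((1/r) *\<^sub>R a1 + y) - (1/r) * s1" using c_lo[OF scl[OF m, of "1/r"]] .
      then have "r * c \<le> r * (norm ((1/r) *\<^sub>R a1 + y) - (1/r) * s1)"
        using 2 by (simp add: mult_left_mono)
      also have "\<dots> = norm (r *\<^sub>R ((1/r) *\<^sub>R a1 + y)) - s1"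
        using 2 by (simp add: right_diff_distrib)
      also have "r *\<^sub>R ((1/r) *\<^sub>R a1 + y) = a1 + r *\<^sub>R y" using 2 by (simp add: algebra_simps)
      finally show ?thesis using e by simp
    next
      case 3
      define u where "u = - r"
      have u: "u > 0" using 3 u_def by simp
      have h: "(1/u) * s1 - norm ((1/u) *\<^sub>R a1 - y) \<le> c" using c_up[OF scl[OF m, of "1/u"]] .
      have "u * ((1/u) * s1 - norm ((1/u) *\<^sub>R a1 - y)) \<le> u * c"
        using mult_left_mono[OF h] u by simp
      moreover have "u * ((1/u) * s1) = s1" using u by simp
      moreover have "u * norm ((1/u) *\<^sub>R a1 - y) = norm (a1 + r *\<^sub>R y)"
      proof -
        have "a1 + r *\<^sub>R y = u *\<^sub>R ((1/u) *\<^sub>R a1 - y)" using u by (simp add: u_def algebra_simps)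
        then show ?thesis using u by simp
      qed
      ultimately have "s1 - norm (a1 + r *\<^sub>R y) \<le> u * c" by (simp add: right_diff_distrib)
      then show ?thesis using e u_def by simp
    qed
  next
    have "(x0 + 0 *\<^sub>R y, norm x0 + 0 * c) \<in> M'" using mM' x0 by blast
    then show "(x0, norm x0) \<in> M'" by simp
  qed
  have sub: "M \<subseteq> M'"
  proof
    fix p assume "p \<in> M"
    then obtain a s where "p = (a,s)" "(a,s) \<in> M" by (cases p) auto
    moreover have "(a + 0 *\<^sub>R y, s + 0 * c) \<in> M'" using mM' \<open>(a,s)\<in>M\<close> by blast
    ultimately show "p \<in> M'" by simp
  qed
  have "(0 + 1 *\<^sub>R y, 0 + 1 * c) \<in> M'" using mM' z by blast
  then have "(y, c) \<in> M'" by simp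
  moreover have "(y,c) \<notin> M" using y by force
  ultimately show ?thesis using ok' sub by blast
qed

lemma hahn_banach_norming:
  fixes x0 :: "'a::real_normed_vector"
  shows "\<exists>\<phi>. bounded_linear \<phi> \<and> (\<forall>v. \<bar>\<phi> v\<bar> \<le> norm v) \<and> \<phi> x0 = norm x0"
proof -
  define A where "A = {G. okg x0 G}"
  define L where "L = {(r *\<^sub>R x0, r * norm x0) | r. True}"
  have "okg x0 L" unfolding okg_def
  proof (intro conjI)
    show "\<forall>a s b t. (a,s)\<in>L \<longrightarrow> (b,t)\<in>L \<longrightarrow> (a+b, s+t)\<in>L"
    proof (intro allI impI)
      fix a s b t assume "(a,s)\<in>L" "(b,t)\<in>L"
      then obtain r1 r2 where "a = r1 *\<^sub>R x0" "s = r1 * norm x0" "b = r2 *\<^sub>R x0" "t = r2 * norm x0"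
        unfolding L_def by blast
      then have "a + b = (r1+r2) *\<^sub>R x0" "s + t = (r1+r2) * norm x0" by (auto simp: algebra_simps)
      then show "(a+b, s+t)\<in>L" unfolding L_def by blast
    qed
    show "\<forall>a s r. (a,s)\<in>L \<longrightarrow> (r *\<^sub>R a, r * s)\<in>L"
    proof (intro allI impI)
      fix a s r assume "(a,s)\<in>L"
      then obtain r1 where "a = r1 *\<^sub>R x0" "s = r1 * norm x0"
        unfolding L_def by blast
      then have "r *\<^sub>R a = (r*r1) *\<^sub>R x0" "r * s = (r*r1) * norm x0" by (auto simp: algebra_simps)
      then show "(r *\<^sub>R a, r * s)\<in>L" unfolding L_def by blast
    qed
    show "\<forall>a s t. (a,s)\<in>L \<longrightarrow> (a,t)\<in>L \<longrightarrow> s=t"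
    proof (intro allI impI)
      fix a s t assume "(a,s)\<in>L" "(a,t)\<in>L"
      then obtain r1 r2 where "a = r1 *\<^sub>R x0" "s = r1 * norm x0" "a = r2 *\<^sub>R x0" "t = r2 * norm x0"
        unfolding L_def by blast
      then show "s = t" by (cases "x0 = 0") (auto simp: scaleR_cancel_right)
    qed
    show "\<forall>a s. (a,s)\<in>L \<longrightarrow> s \<le> norm a"
    proof (intro allI impI)
      fix a s assume "(a,s)\<in>L"
      then obtain r where "a = r *\<^sub>R x0" "s = r * norm x0" unfolding L_def by blast
      then show "s \<le> norm a" by (simp add: abs_ge_self mult_right_mono)
    qed
    have "(1 *\<^sub>R x0, 1 * norm x0) \<in> L" unfolding L_def by blast
    then show "(x0, norm x0) \<in> L" by simp
  qed
  then have "L \<in> A" unfolding A_def by simp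
  then have "A \<noteq> {}" by blast
  have "\<exists>M\<in>A. \<forall>X\<in>A. M \<subseteq> X \<longrightarrow> X = M"
  proof (rule subset_Zorn_nonempty[OF \<open>A \<noteq> {}\<close>])
    fix C assume "C \<noteq> {}" "subset.chain A C"
    then show "\<Union>C \<in> A" using okg_chain[of C x0] unfolding A_def by simp
  qed
  then obtain M where M: "M \<in> A" and max: "\<And>X. X \<in> A \<Longrightarrow> M \<subseteq> X \<Longrightarrow> X = M"
    by blast
  have ok: "okg x0 M" using M A_def by simp
  have tot: "fst ` M = UNIV"
  proof (rule ccontr)
    assume "fst ` M \<noteq> UNIV"
    then obtain y where "y \<notin> fst ` M" by blast
    then obtain M' where "okg x0 M'" "M \<subseteq> M'" "M' \<noteq> M" using okg_extend[OF ok] by blast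
    then show False using max[of M'] unfolding A_def by simp
  qed
  note add = okg_add[OF ok] and scl = okg_scl[OF ok] and fnc = okg_fn[OF ok]
   and dom = okg_dom[OF ok] and x0 = okg_x0[OF ok]
  define \<phi> where "\<phi> a = (THE s. (a,s) \<in> M)" for a
  have mem: "(a, \<phi> a) \<in> M" for a
  proof -
    obtain s where s: "(a,s) \<in> M" using tot by (metis UNIV_I fst_conv imageE surjective_pairing)
    show ?thesis unfolding \<phi>_def by (rule theI[of _ s]) (use s fnc in blast)+
  qed
  have val: "\<phi> a = s" if "(a,s) \<in> M" for a s using fnc[OF mem that] .
  have lin: "linear \<phi>"
  proof (rule linearI)
    show "\<phi> (a + b) = \<phi> a + \<phi> b" for a b using val[OF add[OF mem mem]] .
    show "\<phi> (r *\<^sub>R a) = r *\<^sub>R \<phi> a" for r a using val[OF scl[OF mem]] by simp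
  qed
  have bnd: "\<bar>\<phi> v\<bar> \<le> norm v" for v
  proof -
    have "\<phi> v \<le> norm v" using dom[OF mem] .
    moreover have "\<phi> (-v) \<le> norm (-v)" using dom[OF mem] .
    moreover have "\<phi> (-v) = - \<phi> v" using linear_neg[OF lin] .
    ultimately show ?thesis by simp
  qed
  have "bounded_linear \<phi>"
    using lin bnd by (intro bounded_linear_intro[where K=1]) (auto simp: linear_add linear_scale)
  then show ?thesis using bnd val[OF x0] by blast
qed



lemma subspace_closure_rv:
  fixes S :: "'a::real_normed_vector set"
  assumes "subspace S" shows "subspace (closure S)"
  unfolding subspace_def
proof (intro conjI ballI allI)
  show "0 \<in> closure S" using assms subspace_0 closure_subset by blast
next
  fix u v assume "u \<in> closure S" "v \<in> closure S"
  then obtain a b where a: "\<forall>n. a n \<in> S" "a \<longlonglongrightarrow> u" and b: "\<forall>n. b n \<in> S" "b \<longlonglongrightarrow> v"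
    unfolding closure_sequential by blast
  have "(\<lambda>n. a n + b n) \<longlonglongrightarrow> u + v" using a b by (intro tendsto_add)
  moreover have "\<forall>n. a n + b n \<in> S" using a b assms subspace_add by blast
  ultimately show "u + v \<in> closure S" unfolding closure_sequential
    by (intro exI[where x="\<lambda>n. a n + b n"]) simp
next
  fix c and u assume "u \<in> closure S"
  then obtain a where a: "\<forall>n. a n \<in> S" "a \<longlonglongrightarrow> u"
    unfolding closure_sequential by blast
  have "(\<lambda>n. c *\<^sub>R a n) \<longlonglongrightarrow> c *\<^sub>R u" using a by (intro tendsto_scaleR tendsto_const)
  moreover have "\<forall>n. c *\<^sub>R a n \<in> S" using a assms subspace_scale by blast
  ultimately show "c *\<^sub>R u \<in> closure S" unfolding closure_sequential
    by (intro exI[where x="\<lambda>n. c *\<^sub>R a n"]) simp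
qed

lemma eq_on_dense:
  fixes f g :: "'a::real_normed_vector \<Rightarrow> 'b::real_normed_vector"
  assumes "bounded_linear f" "bounded_linear g" "closure (span S) = UNIV"
    and "\<And>s. s \<in> S \<Longrightarrow> f s = g s"
  shows "f = g"
proof -
  let ?Z = "{v. f v = g v}"
  interpret f: bounded_linear f by fact
  interpret g: bounded_linear g by fact
  have sub: "subspace ?Z" unfolding subspace_def
    by (auto simp: f.add g.add f.scaleR g.scaleR f.zero g.zero)
  have cl: "closed ?Z"
    by (intro closed_Collect_eq continuous_on_id f.continuous_on g.continuous_on)
  have "span S \<subseteq> ?Z" using assms(4) sub by (intro span_minimal) auto
  then have "closure (span S) \<subseteq> ?Z" using cl by (rule closure_minimal)
  then show ?thesis using assms(3) by auto
qed

lemma img_in_closure_span: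
  fixes P :: "'a::real_normed_vector \<Rightarrow> 'a"
  assumes "bounded_linear P" "closure (span (range x)) = UNIV"
    and "\<And>\<alpha>. P (x \<alpha>) \<in> span (x ` I)"
  shows "P v \<in> closure (span (x ` I))"
proof -
  interpret P: bounded_linear P by fact
  let ?Z = "{v. P v \<in> span (x ` I)}"
  have sub: "subspace ?Z" unfolding subspace_def
    by (auto simp: P.add P.scaleR P.zero span_add span_scale span_zero)
  have "span (range x) \<subseteq> ?Z" using assms(3) sub by (intro span_minimal) auto
  then have "span (range x) \<subseteq> P -` closure (span (x ` I))" using closure_subset by blast
  moreover have "closed (P -` closure (span (x ` I)))"
    by (intro continuous_closed_vimage closed_closure) (simp add: P.continuous)
  ultimately have "closure (span (range x)) \<subseteq> P -` closure (span (x ` I))"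
    by (rule closure_minimal)
  then show ?thesis using assms(2) by auto
qed

lemma infdim_nonzero:
  assumes "infinite_dimensional W" shows "\<exists>w\<in>W. w \<noteq> 0"
proof (rule ccontr)
  assume "\<not> ?thesis"
  then have "W \<subseteq> span {}" by auto
  then show False using assms unfolding infinite_dimensional_def by blast
qed

lemma infdim_unit:
  fixes W :: "'a::real_normed_vector set"
  assumes "subspace W" "infinite_dimensional W" shows "\<exists>w\<in>W. norm w = 1"
proof -
  obtain w where "w \<in> W" "w \<noteq> 0" using infdim_nonzero[OF assms(2)] by blast
  then have "(1/norm w) *\<^sub>R w \<in> W" "norm ((1/norm w) *\<^sub>R w) = 1"
    using assms(1) subspace_scale by auto
  then show ?thesis by blast
qed

lemma infdim_ker:
  fixes \<phi> :: "'a::real_vector \<Rightarrow> real"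
  assumes "subspace G" "infinite_dimensional G" "linear \<phi>"
  shows "infinite_dimensional (G \<inter> {v. \<phi> v = 0})"
  unfolding infinite_dimensional_def
proof
  assume "\<exists>B. finite B \<and> G \<inter> {v. \<phi> v = 0} \<subseteq> span B"
  then obtain B where B: "finite B" "G \<inter> {v. \<phi> v = 0} \<subseteq> span B" by blast
  interpret \<phi>: linear \<phi> by fact
  show False
  proof (cases "\<exists>g\<in>G. \<phi> g \<noteq> 0")
    case True
    then obtain g where g: "g \<in> G" "\<phi> g \<noteq> 0" by blast
    have "G \<subseteq> span (insert g B)"
    proof
      fix v assume v: "v \<in> G"
      let ?u = "v - (\<phi> v / \<phi> g) *\<^sub>R g"
      have "?u \<in> G" using v g assms(1) by (simp add: subspace_diff subspace_scale)
      moreover have "\<phi> ?u = 0" using g by (simp add: \<phi>.diff \<phi>.scaleR)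
      ultimately have "?u \<in> span B" using B by blast
      then have "?u \<in> span (insert g B)" by (meson span_mono subset_insertI subsetD)
      moreover have "(\<phi> v / \<phi> g) *\<^sub>R g \<in> span (insert g B)" by (simp add: span_base span_scale)
      ultimately have "?u + (\<phi> v / \<phi> g) *\<^sub>R g \<in> span (insert g B)" by (rule span_add)
      then show "v \<in> span (insert g B)" by simp
    qed
    then show False using assms(2) B(1) unfolding infinite_dimensional_def by blast
  next
    case False
    then have "G \<subseteq> span B" using B by blast
    then show False using assms(2) B(1) unfolding infinite_dimensional_def by blast
  qed
qed

lemma infdim_of_indep:
  fixes W :: "'a::real_vector set"
  assumes "\<And>m. \<exists>S\<subseteq>W. finite S \<and> independent S \<and> card S = m"
  shows "infinite_dimensional W"
  unfolding infinite_dimensional_def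
proof
  assume "\<exists>B. finite B \<and> W \<subseteq> span B"
  then obtain B where B: "finite B" "W \<subseteq> span B" by blast
  obtain S where S: "S \<subseteq> W" "finite S" "independent S" "card S = Suc (card B)" using assms by blast
  have "card S \<le> card B" using independent_span_bound[OF B(1) S(3)] S(1) B(2) by blast
  then show False using S(4) by simp
qed

lemma indep_of_infdim:
  fixes V :: "'a::real_vector set"
  assumes "infinite_dimensional V"
  shows "\<exists>S\<subseteq>V. finite S \<and> independent S \<and> card S = m"
proof -
  obtain B where B: "B \<subseteq> V" "independent B" "V \<subseteq> span B" by (meson basis_exists)
  have "infinite B" using B(3) assms unfolding infinite_dimensional_def by blast
  then obtain S where "finite S" "card S = m" "S \<subseteq> B" using infinite_arbitrarily_large by blast
  then show ?thesis using B independent_mono by blast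
qed

lemma infdim_image:
  fixes A :: "'a::real_vector \<Rightarrow> 'b::real_vector"
  assumes "subspace V" "infinite_dimensional V" "linear A" "inj_on A V"
  shows "infinite_dimensional (A ` V)"
proof (rule infdim_of_indep)
  fix m
  obtain S where S: "S \<subseteq> V" "finite S" "independent S" "card S = m" using indep_of_infdim[OF assms(2)] by blast
  have "span S \<subseteq> V" using S(1) assms(1) by (rule span_minimal)
  then have inj: "inj_on A (span S)" using assms(4) inj_on_subset by blast
  have "independent (A ` S)" using linear_independent_injective_image[OF assms(3) S(3) inj] .
  moreover have "card (A ` S) = m" using S card_image inj_on_subset[OF assms(4) S(1)] by metis
  ultimately show "\<exists>T\<subseteq>A ` V. finite T \<and> independent T \<and> card T = m" using S by blast
qed

lemma closed_image_bb:
  fixes A :: "'a::banach \<Rightarrow> 'b::banach"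
  assumes "bounded_linear A" "closed S" "subspace S" "c > 0" "\<And>v. v \<in> S \<Longrightarrow> c * norm v \<le> norm (A v)"
  shows "closed (A ` S)"
proof -
  interpret A: bounded_linear A by fact
  have "complete (A ` S)" unfolding complete_def
  proof (intro allI impI)
    fix u assume u: "(\<forall>n. u n \<in> A ` S) \<and> Cauchy u"
    define s where "s n = inv_into S A (u n)" for n
    have sS: "s n \<in> S" for n unfolding s_def using u by (auto intro: inv_into_into)
    have As: "A (s n) = u n" for n unfolding s_def using u by (auto intro: f_inv_into_f)
    have "Cauchy s"
    proof (rule metric_CauchyI)
      fix e :: real assume "e > 0"
      then obtain M where M: "\<forall>m\<ge>M. \<forall>n\<ge>M. dist (u m) (u n) < c * e"
        using u assms(4) unfolding Cauchy_def by (meson mult_pos_pos)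
      show "\<exists>M. \<forall>m\<ge>M. \<forall>n\<ge>M. dist (s m) (s n) < e"
      proof (intro exI allI impI)
        fix m n assume "m \<ge> M" "n \<ge> M"
        have "s m - s n \<in> S" using sS assms(3) subspace_diff by blast
        then have "c * norm (s m - s n) \<le> norm (A (s m - s n))" using assms(5) by blast
        also have "\<dots> = dist (u m) (u n)" using As by (simp add: A.diff dist_norm)
        also have "\<dots> < c * e" using M \<open>m \<ge> M\<close> \<open>n \<ge> M\<close> by blast
        finally show "dist (s m) (s n) < e" using assms(4) by (simp add: dist_norm)
      qed
    qed
    then obtain l where l: "s \<longlonglongrightarrow> l" using convergent_eq_Cauchy by blast
    have "l \<in> S" using assms(2) sS l closed_sequentially by blast
    moreover have "u \<longlonglongrightarrow> A l"
    proof -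
      have "(\<lambda>n. A (s n)) \<longlonglongrightarrow> A l" using l by (intro A.tendsto)
      then show ?thesis using As by simp
    qed
    ultimately show "\<exists>l\<in>A ` S. u \<longlonglongrightarrow> l" by blast
  qed
  then show ?thesis by (rule complete_imp_closed)
qed



definition SSo :: "('a::real_normed_vector \<Rightarrow> 'b::real_normed_vector) \<Rightarrow> 'a set \<Rightarrow> bool" where
  "SSo T Y \<longleftrightarrow> (\<forall>W. subspace W \<and> closed W \<and> infinite_dimensional W \<and> W \<subseteq> Y \<longrightarrow>
      (\<forall>\<delta>>0. \<exists>w\<in>W. norm w = 1 \<and> norm (T w) < \<delta>))"

lemma SSoD: "SSo T Y \<Longrightarrow> subspace W \<Longrightarrow> closed W \<Longrightarrow> infinite_dimensional W \<Longrightarrow> W \<subseteq> Y \<Longrightarrow> \<delta> > 0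
   \<Longrightarrow> \<exists>w\<in>W. norm w = 1 \<and> norm (T w) < \<delta>"
  unfolding SSo_def by blast

lemma SSo_mono: "SSo T Y \<Longrightarrow> Y' \<subseteq> Y \<Longrightarrow> SSo T Y'"
  unfolding SSo_def by blast

lemma span_range_repr:
  fixes w :: "nat \<Rightarrow> 'a::real_vector"
  assumes "v \<in> span (range w)"
  shows "\<exists>N c. v = (\<Sum>k<N. c k *\<^sub>R w k)"
proof -
  let ?R = "{v. \<exists>N c. v = (\<Sum>k<N. c k *\<^sub>R w k)}"
  have ext: "(\<Sum>k<N. c k *\<^sub>R w k) = (\<Sum>k<N'. (if k < N then c k else 0) *\<^sub>R w k)" if "N \<le> N'" for N N' c
    by (rule sum.mono_neutral_cong_left) (use that in auto)
  have "subspace ?R" unfolding subspace_def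
  proof (intro conjI ballI allI)
    show "0 \<in> ?R" by (rule CollectI, rule exI[of _ 0]) simp
  next
    fix u v assume "u \<in> ?R" "v \<in> ?R"
    then obtain N1 c1 N2 c2 where u: "u = (\<Sum>k<N1. c1 k *\<^sub>R w k)" and v: "v = (\<Sum>k<N2. c2 k *\<^sub>R w k)" by blast
    let ?N = "max N1 N2"
    have "u = (\<Sum>k<?N. (if k < N1 then c1 k else 0) *\<^sub>R w k)" using ext[of N1 ?N c1] u by simp
    moreover have "v = (\<Sum>k<?N. (if k < N2 then c2 k else 0) *\<^sub>R w k)" using ext[of N2 ?N c2] v by simp
    ultimately have e: "u + v = (\<Sum>k<?N. ((if k < N1 then c1 k else 0) + (if k < N2 then c2 k else 0)) *\<^sub>R w k)"
      by (simp add: sum.distrib scaleR_add_left)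
    show "u + v \<in> ?R" by (intro CollectI exI) (rule e)
  next
    fix r and u assume "u \<in> ?R"
    then obtain N c where u: "u = (\<Sum>k<N. c k *\<^sub>R w k)" by blast
    then have e: "r *\<^sub>R u = (\<Sum>k<N. (r * c k) *\<^sub>R w k)" by (simp add: scaleR_sum_right)
    show "r *\<^sub>R u \<in> ?R" by (intro CollectI exI) (rule e)
  qed
  moreover have "range w \<subseteq> ?R"
  proof
    fix v assume "v \<in> range w"
    then obtain j where j: "v = w j" by blast
    have "(\<Sum>k<Suc j. (if k = j then 1 else 0) *\<^sub>R w k) = (\<Sum>k<Suc j. if k = j then w k else 0)"
      by (rule sum.cong) auto
    also have "\<dots> = w j" by (simp add: sum.delta')
    finally have e: "v = (\<Sum>k<Suc j. (if k = j then 1 else 0) *\<^sub>R w k)" using j by simp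
    show "v \<in> ?R" by (intro CollectI exI) (rule e)
  qed
  ultimately have "span (range w) \<subseteq> ?R" by (intro span_minimal)
  then show ?thesis using assms by blast
qed

lemma kato:
  fixes T :: "'a::banach \<Rightarrow> 'b::real_normed_vector"
  assumes T: "bounded_linear T" and V: "subspace V" "closed V" "infinite_dimensional V"
    and ss: "SSo T V" and d: "\<delta> > 0"
  shows "\<exists>W. subspace W \<and> closed W \<and> infinite_dimensional W \<and> W \<subseteq> V \<and> (\<forall>w\<in>W. norm (T w) \<le> \<delta> * norm w)"
proof -
  interpret T: bounded_linear T by fact
  define t where "t n = \<delta> / 2 / 4 ^ n" for n :: nat
  have tpos: "t n > 0" for n using d unfolding t_def by simp
  define Q where "Q G n p \<longleftrightarrow> fst p \<in> G \<and> norm (fst p) = 1 \<and> norm (T (fst p)) < t n \<and>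
      bounded_linear (snd p) \<and> (\<forall>v. \<bar>snd p v\<bar> \<le> norm v) \<and> snd p (fst p) = 1" for G n p
  define good where "good G \<longleftrightarrow> subspace G \<and> closed G \<and> infinite_dimensional G \<and> G \<subseteq> V" for G
  have step: "\<exists>p. Q G n p" if gG: "good G" for G n
  proof -
    obtain w where w: "w \<in> G" "norm w = 1" "norm (T w) < t n"
      using SSoD[OF ss, of G "t n"] gG tpos unfolding good_def by blast
    obtain \<phi> where \<phi>: "bounded_linear \<phi>" "\<forall>v. \<bar>\<phi> v\<bar> \<le> norm v" "\<phi> w = norm w"
      using hahn_banach_norming by blast
    show ?thesis unfolding Q_def using w \<phi> by (intro exI[of _ "(w,\<phi>)"]) simp
  qed
  define nx where "nx G n = (SOME p. Q G n p)" for G n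
  define Gs where "Gs = rec_nat V (\<lambda>n G. G \<inter> {v. snd (nx G n) v = 0})"
  have Gs0: "Gs 0 = V" and GsS: "Gs (Suc n) = Gs n \<inter> {v. snd (nx (Gs n) n) v = 0}" for n
    unfolding Gs_def by simp_all
  have goodGs: "good (Gs n) \<and> Q (Gs n) n (nx (Gs n) n)" for n
  proof (induction n)
    case 0
    have "good (Gs 0)" using V Gs0 unfolding good_def by simp
    then show ?case using step[of "Gs 0" 0] unfolding nx_def by (metis someI_ex)
  next
    case (Suc n)
    let ?\<phi> = "snd (nx (Gs n) n)"
    have g: "good (Gs n)" and q: "Q (Gs n) n (nx (Gs n) n)" using Suc by auto
    have bl: "bounded_linear ?\<phi>" using q unfolding Q_def by blast
    have "good (Gs (Suc n))" unfolding GsS good_def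
    proof (intro conjI)
      show "subspace (Gs n \<inter> {v. ?\<phi> v = 0})"
      proof -
        have lin: "linear ?\<phi>" using bl bounded_linear.linear by blast
        have "subspace {v. ?\<phi> v = 0}"
          by (auto simp: subspace_def linear_0[OF lin] linear_add[OF lin] linear_scale[OF lin])
        then show ?thesis using g unfolding good_def by (intro subspace_inter) auto
      qed
      show "closed (Gs n \<inter> {v. ?\<phi> v = 0})"
        using g bl unfolding good_def
        by (intro closed_Int closed_Collect_eq continuous_on_const bounded_linear.continuous_on[OF bl] continuous_on_id) auto
      show "infinite_dimensional (Gs n \<inter> {v. ?\<phi> v = 0})"
        using g bl unfolding good_def by (intro infdim_ker) (auto simp: bounded_linear.linear)
      show "Gs n \<inter> {v. ?\<phi> v = 0} \<subseteq> V" using g unfolding good_def by blast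
    qed
    then show ?case using step[of "Gs (Suc n)" "Suc n"] unfolding nx_def by (metis someI_ex)
  qed
  define w where "w n = fst (nx (Gs n) n)" for n
  define \<phi> where "\<phi> n = snd (nx (Gs n) n)" for n
  have wG: "w n \<in> Gs n" and wn: "norm (w n) = 1" and Tw: "norm (T (w n)) < t n"
    and \<phi>bl: "bounded_linear (\<phi> n)" and \<phi>b: "\<And>v. \<bar>\<phi> n v\<bar> \<le> norm v" and \<phi>w: "\<phi> n (w n) = 1" for n
    using goodGs[of n] unfolding Q_def w_def \<phi>_def by auto
  have anti: "Gs n \<subseteq> Gs m" if "m \<le> n" for m n
    using that
  proof (induction n)
    case 0 then show ?case by simp
  next
    case (Suc n) then show ?case using GsS[of n] by (cases "m = Suc n") auto
  qed
  have \<phi>later: "\<phi> j (w k) = 0" if "j < k" for j k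
  proof -
    have "w k \<in> Gs (Suc j)" using wG[of k] anti[of "Suc j" k] that by auto
    then show ?thesis unfolding GsS \<phi>_def by simp
  qed
  have Gsub: "Gs n \<subseteq> V" for n using anti[of 0 n] Gs0 by simp
  have coef: "\<bar>c n\<bar> \<le> 2 ^ n * norm (\<Sum>k<N. c k *\<^sub>R w k)" if "n < N" for N c n
    using that
  proof (induction n rule: less_induct)
    case (less n)
    let ?v = "\<Sum>k<N. c k *\<^sub>R w k"
    have lin: "linear (\<phi> n)" using \<phi>bl bounded_linear.linear by blast
    have "\<phi> n ?v = (\<Sum>k<N. c k * \<phi> n (w k))"
      by (simp add: linear_sum[OF lin] linear_scale[OF lin])
    also have "\<dots> = (\<Sum>k<Suc n. c k * \<phi> n (w k))"
      by (rule sum.mono_neutral_right) (use less.prems \<phi>later in auto)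
    also have "\<dots> = (\<Sum>k<n. c k * \<phi> n (w k)) + c n" using \<phi>w by simp
    finally have eq: "c n = \<phi> n ?v - (\<Sum>k<n. c k * \<phi> n (w k))" by simp
    have "\<bar>\<Sum>k<n. c k * \<phi> n (w k)\<bar> \<le> (\<Sum>k<n. \<bar>c k\<bar>)"
    proof -
      have "\<bar>\<Sum>k<n. c k * \<phi> n (w k)\<bar> \<le> (\<Sum>k<n. \<bar>c k * \<phi> n (w k)\<bar>)" by (rule sum_abs)
      also have "\<dots> \<le> (\<Sum>k<n. \<bar>c k\<bar>)"
      proof (rule sum_mono)
        fix k have "\<bar>\<phi> n (w k)\<bar> \<le> 1" using \<phi>b[of n "w k"] wn by simp
        then show "\<bar>c k * \<phi> n (w k)\<bar> \<le> \<bar>c k\<bar>" by (simp add: abs_mult mult_left_le)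
      qed
      finally show ?thesis .
    qed
    also have "\<dots> \<le> (\<Sum>k<n. 2 ^ k * norm ?v)"
      by (rule sum_mono) (use less.IH less.prems in auto)
    also have "\<dots> = (2 ^ n - 1) * norm ?v"
      by (simp add: sum_distrib_right[symmetric] geometric_sum)
    finally have "\<bar>c n\<bar> \<le> norm ?v + (2 ^ n - 1) * norm ?v"
      using eq \<phi>b[of n ?v] by linarith
    then show ?case by (simp add: algebra_simps)
  qed
  have coef0: "c n = 0" if "(\<Sum>k<N. c k *\<^sub>R w k) = 0" "n < N" for N c n
    using coef[OF that(2), of c] that(1) by simp
  have Tbound: "norm (T v) \<le> \<delta> * norm v" if vs: "v \<in> span (range w)" for v
  proof -
    obtain N c where v: "v = (\<Sum>k<N. c k *\<^sub>R w k)" using span_range_repr[OF vs] by blast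
    have "norm (T v) = norm (\<Sum>k<N. c k *\<^sub>R T (w k))" by (simp add: v T.sum T.scaleR)
    also have "\<dots> \<le> (\<Sum>k<N. norm (c k *\<^sub>R T (w k)))" by (rule norm_sum)
    also have "\<dots> \<le> (\<Sum>k<N. 2 ^ k * norm v * t k)"
    proof (rule sum_mono)
      fix k assume "k \<in> {..<N}"
      then have "\<bar>c k\<bar> \<le> 2 ^ k * norm v" using coef[of k N c] v by simp
      moreover have "norm (T (w k)) \<le> t k" using Tw[of k] by simp
      ultimately show "norm (c k *\<^sub>R T (w k)) \<le> 2 ^ k * norm v * t k"
        by (simp add: mult_mono)
    qed
    also have "\<dots> = (\<Sum>k<N. norm v * (\<delta> / 2) * (1/2) ^ k)"
    proof (rule sum.cong[OF refl])
      fix k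
      have f4: "(4::real) ^ k = 2 ^ k * 2 ^ k" by (simp flip: power_mult_distrib)
      have p: "(2::real) ^ k > 0" by simp
      show "2 ^ k * norm v * t k = norm v * (\<delta> / 2) * (1/2) ^ k"
        unfolding t_def f4 using p by (simp add: power_one_over field_simps)
    qed
    also have "\<dots> = norm v * (\<delta> / 2) * (\<Sum>k<N. (1/2) ^ k)"
      by (simp add: sum_distrib_left)
    also have "\<dots> \<le> norm v * (\<delta> / 2) * 2"
    proof -
      have "(\<Sum>k<N. (1/2::real) ^ k) \<le> 2" by (simp add: geometric_sum)
      then show ?thesis using d by (intro mult_left_mono) auto
    qed
    finally show ?thesis by (simp add: mult.commute)
  qed
  define W where "W = closure (span (range w))"
  have "subspace W" unfolding W_def by (intro subspace_closure_rv subspace_span)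
  moreover have "closed W" unfolding W_def by simp
  moreover have "W \<subseteq> V"
  proof -
    have "range w \<subseteq> V" using wG Gsub by blast
    then have "span (range w) \<subseteq> V" using V(1) by (rule span_minimal)
    then show ?thesis unfolding W_def using V(2) by (rule closure_minimal)
  qed
  moreover have "\<forall>v\<in>W. norm (T v) \<le> \<delta> * norm v"
  proof -
    have c1: "continuous_on UNIV (\<lambda>v. norm (T v))"
      by (intro continuous_on_norm T.continuous_on continuous_on_id)
    have c2: "continuous_on UNIV (\<lambda>v. \<delta> * norm v)"
      by (intro continuous_on_mult continuous_on_const continuous_on_norm continuous_on_id)
    have "closed {v. norm (T v) \<le> \<delta> * norm v}" using closed_Collect_le[OF c1 c2] by simp
    then have "W \<subseteq> {v. norm (T v) \<le> \<delta> * norm v}" unfolding W_def using Tbound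
      by (intro closure_minimal) auto
    then show ?thesis by blast
  qed
  moreover have "infinite_dimensional W"
  proof (rule infdim_of_indep)
    fix m
    have inj: "inj_on w {..<m}"
    proof (rule inj_onI)
      fix i j assume "i \<in> {..<m}" "j \<in> {..<m}" "w i = w j"
      show "i = j"
      proof (rule ccontr)
        assume "i \<noteq> j"
        then consider "i < j" | "j < i" by linarith
        then show False
        proof cases
          case 1 then have "\<phi> i (w j) = 0" by (rule \<phi>later)
          then show False using \<phi>w[of i] \<open>w i = w j\<close> by simp
        next
          case 2 then have "\<phi> j (w i) = 0" by (rule \<phi>later)
          then show False using \<phi>w[of j] \<open>w i = w j\<close> by simp
        qed
      qed
    qed
    have "independent (w ` {..<m})"
    proof
      assume "dependent (w ` {..<m})"
      then obtain u where u: "\<exists>v\<in>w ` {..<m}. u v \<noteq> 0" "(\<Sum>v\<in>w ` {..<m}. u v *\<^sub>R v) = 0"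
        using dependent_finite[of "w ` {..<m}"] by auto
      have "(\<Sum>k<m. u (w k) *\<^sub>R w k) = 0" using u(2) sum.reindex[OF inj, of "\<lambda>v. u v *\<^sub>R v"] by simp
      then have "u (w k) = 0" if "k < m" for k using coef0[of "\<lambda>k. u (w k)" m k] that by simp
      then show False using u(1) by auto
    qed
    moreover have "w ` {..<m} \<subseteq> W"
    proof -
      have "w ` {..<m} \<subseteq> range w" by auto
      also have "\<dots> \<subseteq> span (range w)" by (rule span_superset)
      also have "\<dots> \<subseteq> W" unfolding W_def by (rule closure_subset)
      finally show ?thesis .
    qed
    moreover have "card (w ` {..<m}) = m" using card_image[OF inj] by simp
    ultimately show "\<exists>S\<subseteq>W. finite S \<and> independent S \<and> card S = m" by blast
  qed
  ultimately show ?thesis by blast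
qed

lemma SSo_add:
  fixes A B :: "'a::banach \<Rightarrow> 'b::real_normed_vector"
  assumes "bounded_linear A" "SSo A Y" "SSo B Y"
  shows "SSo (\<lambda>v. A v + B v) Y"
  unfolding SSo_def
proof (intro allI impI)
  fix W and \<delta> :: real
  assume W: "subspace W \<and> closed W \<and> infinite_dimensional W \<and> W \<subseteq> Y" and d: "\<delta> > 0"
  have "SSo A W" using assms(2) W SSo_mono by blast
  then obtain W' where W': "subspace W'" "closed W'" "infinite_dimensional W'" "W' \<subseteq> W"
     "\<forall>w\<in>W'. norm (A w) \<le> \<delta>/2 * norm w"
    using kato[OF assms(1), of W "\<delta>/2"] W d by auto
  obtain w where w: "w \<in> W'" "norm w = 1" "norm (B w) < \<delta>/2"
    using SSoD[OF assms(3) W'(1-3), of "\<delta>/2"] W'(4) W d by auto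
  have "norm (A w + B w) \<le> norm (A w) + norm (B w)" by (rule norm_triangle_ineq)
  also have "\<dots> < \<delta>" using W'(5) w by fastforce
  finally show "\<exists>w\<in>W. norm w = 1 \<and> norm (A w + B w) < \<delta>" using w W'(4) by blast
qed



lemma interval_down: "(\<And>a b. b \<in> I \<Longrightarrow> a \<le> b \<Longrightarrow> a \<in> I) \<Longrightarrow> is_interval_wo I"
  unfolding is_interval_wo_def by blast

lemma interval_up: "(\<And>a b. a \<in> I \<Longrightarrow> a \<le> b \<Longrightarrow> b \<in> I) \<Longrightarrow> is_interval_wo I"
  unfolding is_interval_wo_def by blast

lemma interval_Int: "is_interval_wo I \<Longrightarrow> is_interval_wo J \<Longrightarrow> is_interval_wo (I \<inter> J)"
  unfolding is_interval_wo_def by blast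

lemma interval_single: "is_interval_wo {a}"
  unfolding is_interval_wo_def by (auto intro: order.antisym)

locale tbasis =
  fixes x :: "'i::wellorder \<Rightarrow> 'a::banach" and C :: real
  assumes nz: "\<And>\<alpha>. x \<alpha> \<noteq> 0" and dense: "closure (span (range x)) = UNIV" and C1: "C \<ge> 1"
    and projs: "\<And>I. is_interval_wo I \<Longrightarrow> (\<exists>P. bounded_linear P \<and> (\<forall>v. P (P v) = P v) \<and> (\<forall>v. norm (P v) \<le> C * norm v) \<and>
             (\<forall>F c. finite F \<longrightarrow>
                 P (\<Sum>\<alpha>\<in>F. c \<alpha> *\<^sub>R x \<alpha>) = (\<Sum>\<alpha>\<in>F \<inter> I. c \<alpha> *\<^sub>R x \<alpha>)))"
begin

lemma ext_basis:
  fixes f g :: "'a \<Rightarrow> 'b::real_normed_vector"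
  assumes "bounded_linear f" "bounded_linear g" "\<And>\<alpha>. f (x \<alpha>) = g (x \<alpha>)"
  shows "f = g"
  using eq_on_dense[OF assms(1,2) dense] assms(3) by blast

definition pj :: "'i set \<Rightarrow> 'a \<Rightarrow> 'a" where
  "pj I = (SOME P. bounded_linear P \<and> (\<forall>v. norm (P v) \<le> C * norm v) \<and> (\<forall>\<alpha>. P (x \<alpha>) = (if \<alpha> \<in> I then x \<alpha> else 0)))"

lemma pj:
  assumes "is_interval_wo I"
  shows "bounded_linear (pj I)" "\<And>v. norm (pj I v) \<le> C * norm v" "\<And>\<alpha>. pj I (x \<alpha>) = (if \<alpha> \<in> I then x \<alpha> else 0)"
proof -
  obtain P where P: "bounded_linear P" "\<forall>v. norm (P v) \<le> C * norm v"
    "\<forall>F c. finite F \<longrightarrow> P (\<Sum>\<alpha>\<in>F. c \<alpha> *\<^sub>R x \<alpha>) = (\<Sum>\<alpha>\<in>F \<inter> I. c \<alpha> *\<^sub>R x \<alpha>)"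
    using projs[OF assms] by blast
  have "P (x \<alpha>) = (if \<alpha> \<in> I then x \<alpha> else 0)" for \<alpha>
    using P(3)[rule_format, of "{\<alpha>}" "\<lambda>_. 1"] by (cases "\<alpha> \<in> I") auto
  then have "\<exists>P. bounded_linear P \<and> (\<forall>v. norm (P v) \<le> C * norm v) \<and> (\<forall>\<alpha>. P (x \<alpha>) = (if \<alpha> \<in> I then x \<alpha> else 0))"
    using P by blast
  then have "bounded_linear (pj I) \<and> (\<forall>v. norm (pj I v) \<le> C * norm v) \<and> (\<forall>\<alpha>. pj I (x \<alpha>) = (if \<alpha> \<in> I then x \<alpha> else 0))"
    unfolding pj_def by (rule someI_ex)
  then show "bounded_linear (pj I)" "\<And>v. norm (pj I v) \<le> C * norm v" "\<And>\<alpha>. pj I (x \<alpha>) = (if \<alpha> \<in> I then x \<alpha> else 0)"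
    by blast+
qed

lemma x_inj: "inj x"
proof (rule injI)
  fix a b assume e: "x a = x b"
  show "a = b"
  proof (rule ccontr)
    assume "a \<noteq> b"
    have "pj {a} (x a) = x a" "pj {a} (x b) = 0" using pj(3)[OF interval_single] \<open>a \<noteq> b\<close> by auto
    then show False using e nz by simp
  qed
qed

lemma biorth_ex: "\<exists>!f::'a \<Rightarrow> real. bounded_linear f \<and> (\<forall>\<beta>. f (x \<beta>) = (if \<beta> = \<alpha> then 1 else 0))"
proof -
  obtain \<phi> where \<phi>: "bounded_linear \<phi>" "\<forall>v. \<bar>\<phi> v\<bar> \<le> norm v" "\<phi> (x \<alpha>) = norm (x \<alpha>)"
    using hahn_banach_norming by blast
  define f where "f v = (1 / norm (x \<alpha>)) * \<phi> (pj {\<alpha>} v)" for v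
  have bl: "bounded_linear f" unfolding f_def
    by (intro bounded_linear_compose[OF bounded_linear_mult_right]
          bounded_linear_compose[OF \<phi>(1)] pj(1)[OF interval_single])
  have fx: "f (x \<beta>) = (if \<beta> = \<alpha> then 1 else 0)" for \<beta>
    unfolding f_def using pj(3)[OF interval_single, of \<alpha> \<beta>] \<phi>(3) nz[of \<alpha>]
      linear_0[OF bounded_linear.linear[OF \<phi>(1)]] by auto
  show ?thesis
  proof (rule ex1I[where a=f])
    show "bounded_linear f \<and> (\<forall>\<beta>. f (x \<beta>) = (if \<beta> = \<alpha> then 1 else 0))" using bl fx by blast
    fix g :: "'a \<Rightarrow> real" assume "bounded_linear g \<and> (\<forall>\<beta>. g (x \<beta>) = (if \<beta> = \<alpha> then 1 else 0))"
    then show "g = f" using ext_basis[of g f] bl fx by auto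
  qed
qed

lemma biorth: "bounded_linear (biorth x \<alpha>)" "\<And>\<beta>. biorth x \<alpha> (x \<beta>) = (if \<beta> = \<alpha> then 1 else 0)"
proof -
  have "bounded_linear (biorth x \<alpha>) \<and> (\<forall>\<beta>. biorth x \<alpha> (x \<beta>) = (if \<beta> = \<alpha> then 1 else 0))"
    unfolding biorth_def by (rule theI'[OF biorth_ex])
  then show "bounded_linear (biorth x \<alpha>)" "\<And>\<beta>. biorth x \<alpha> (x \<beta>) = (if \<beta> = \<alpha> then 1 else 0)" by blast+
qed

lemma biorth_lin: "linear (biorth x \<alpha>)"
  using biorth(1) bounded_linear.linear by blast

lemma repr:
  assumes "finite F" "v \<in> span (x ` F)"
  shows "v = (\<Sum>\<alpha>\<in>F. biorth x \<alpha> v *\<^sub>R x \<alpha>)"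
proof -
  let ?Z = "{v. v = (\<Sum>\<alpha>\<in>F. biorth x \<alpha> v *\<^sub>R x \<alpha>)}"
  have sub: "subspace ?Z" unfolding subspace_def
  proof (intro conjI ballI allI)
    show "0 \<in> ?Z" by (simp add: linear_0[OF biorth_lin])
  next
    fix u v assume u: "u \<in> ?Z" and v: "v \<in> ?Z"
    have "(\<Sum>\<alpha>\<in>F. biorth x \<alpha> (u + v) *\<^sub>R x \<alpha>) =
        (\<Sum>\<alpha>\<in>F. biorth x \<alpha> u *\<^sub>R x \<alpha>) + (\<Sum>\<alpha>\<in>F. biorth x \<alpha> v *\<^sub>R x \<alpha>)"
      by (simp add: linear_add[OF biorth_lin] scaleR_add_left sum.distrib)
    then show "u + v \<in> ?Z" using u v by simp
  next
    fix c and u assume u: "u \<in> ?Z"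
    have "(\<Sum>\<alpha>\<in>F. biorth x \<alpha> (c *\<^sub>R u) *\<^sub>R x \<alpha>) = c *\<^sub>R (\<Sum>\<alpha>\<in>F. biorth x \<alpha> u *\<^sub>R x \<alpha>)"
      by (simp add: linear_scale[OF biorth_lin] scaleR_sum_right)
    then show "c *\<^sub>R u \<in> ?Z" using u by simp
  qed
  have "x ` F \<subseteq> ?Z"
  proof
    fix u assume "u \<in> x ` F"
    then obtain \<beta> where b: "\<beta> \<in> F" "u = x \<beta>" by blast
    have "(\<Sum>\<alpha>\<in>F. biorth x \<alpha> (x \<beta>) *\<^sub>R x \<alpha>) = (\<Sum>\<alpha>\<in>F. if \<beta> = \<alpha> then x \<alpha> else 0)"
      by (rule sum.cong) (auto simp: biorth(2))
    also have "\<dots> = x \<beta>" using b assms(1) by (simp add: sum.delta)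
    finally show "u \<in> ?Z" using b by simp
  qed
  then have "span (x ` F) \<subseteq> ?Z" using sub by (rule span_minimal)
  then show ?thesis using assms by blast
qed

lemma supp_span:
  assumes "z \<in> span (x ` M)"
  shows "finite (supp_b x z)" "supp_b x z \<subseteq> M" "z \<noteq> 0 \<Longrightarrow> supp_b x z \<noteq> {}"
proof -
  obtain t r where t: "z = (\<Sum>a\<in>t. r a *\<^sub>R a)" "finite t" "t \<subseteq> x ` M"
    using assms unfolding span_explicit by blast
  define F where "F = {\<alpha>\<in>M. x \<alpha> \<in> t}"
  have Ff: "finite F" unfolding F_def using finite_vimageI[OF t(2) x_inj] by (rule rev_finite_subset) auto
  have tF: "t = x ` F" unfolding F_def using t(3) by auto
  have zF: "z \<in> span (x ` F)" using t tF by (auto simp: span_explicit)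
  have van: "biorth x \<alpha> z = 0" if "\<alpha> \<notin> F" for \<alpha>
  proof -
    let ?Z = "{v. biorth x \<alpha> v = 0}"
    have "subspace ?Z" unfolding subspace_def
      by (auto simp: linear_add[OF biorth_lin] linear_scale[OF biorth_lin] linear_0[OF biorth_lin])
    moreover have "x ` F \<subseteq> ?Z" using that by (auto simp: biorth(2))
    ultimately have "span (x ` F) \<subseteq> ?Z" by (intro span_minimal)
    then show ?thesis using zF by blast
  qed
  have sF: "supp_b x z \<subseteq> F" unfolding supp_b_def using van by blast
  then show "finite (supp_b x z)" using Ff by (rule finite_subset)
  show "supp_b x z \<subseteq> M" using sF unfolding F_def by blast
  assume "z \<noteq> 0"
  show "supp_b x z \<noteq> {}"
  proof
    assume "supp_b x z = {}"
    then have "\<forall>\<alpha>. biorth x \<alpha> z = 0" unfolding supp_b_def by blast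
    then have "z = 0" using repr[OF Ff zF] by simp
    then show False using \<open>z \<noteq> 0\<close> by simp
  qed
qed

lemma supp_scale: "c \<noteq> 0 \<Longrightarrow> supp_b x (c *\<^sub>R z) = supp_b x z"
  unfolding supp_b_def by (simp add: linear_scale[OF biorth_lin])

lemma pj_closure:
  assumes "is_interval_wo I"
  shows "pj I v \<in> closure (span (x ` I))"
  by (rule img_in_closure_span[OF pj(1)[OF assms] dense])
     (simp add: pj(3)[OF assms] span_base span_zero)

end



lemma SSo_zero:
  shows "SSo (\<lambda>v::'v::real_normed_vector. 0::'v) Y"
  unfolding SSo_def using infdim_unit by fastforce

lemma not_SSo_id:
  assumes "subspace Y" "closed Y" "infinite_dimensional Y"
  shows "\<not> SSo (\<lambda>v::'v::real_normed_vector. v) Y"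
proof
  assume ss: "SSo (\<lambda>v. v) Y"
  obtain w where "w \<in> Y" "norm w = 1" "norm w < 1" using SSoD[OF ss assms order_refl, of 1] by auto
  then show False by simp
qed

locale tbasis_inc = tbasis +
  assumes inc: "\<And>I J. is_interval_wo I \<Longrightarrow> is_interval_wo J \<Longrightarrow> I \<inter> J = {} \<Longrightarrow>
            totally_incomparable (subsp x I) (subsp x J)"
begin

lemma iso_step:
  assumes L: "is_interval_wo L" "is_interval_wo (- L)"
    and V: "subspace V" "closed V" "infinite_dimensional V"
    and d0: "\<delta>0 > 0" "\<And>v. v \<in> V \<Longrightarrow> \<delta>0 * norm v \<le> norm (pj L v)"
    and d1: "\<delta>1 > 0" "\<And>v. v \<in> V \<Longrightarrow> \<delta>1 * norm v \<le> norm (pj (- L) v)"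
  shows False
proof -
  define A where "A = pj L"
  define B where "B = pj (- L)"
  have Abl: "bounded_linear A" and Bbl: "bounded_linear B" unfolding A_def B_def using pj(1) L by auto
  interpret A: bounded_linear A by fact
  interpret B: bounded_linear B by fact
  have Ab: "norm (A v) \<le> C * norm v" and Bb: "norm (B v) \<le> C * norm v" for v
    unfolding A_def B_def using pj(2) L by auto
  have Alo: "\<delta>0 * norm v \<le> norm (A v)" if "v \<in> V" for v using d0(2)[OF that] unfolding A_def .
  have Blo: "\<delta>1 * norm v \<le> norm (B v)" if "v \<in> V" for v using d1(2)[OF that] unfolding B_def .
  have injA: "inj_on A V"
  proof (rule inj_onI)
    fix u v assume "u \<in> V" "v \<in> V" "A u = A v"
    then have "u - v \<in> V" "A (u - v) = 0" using V(1) subspace_diff A.diff by auto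
    then have "\<delta>0 * norm (u - v) \<le> 0" using Alo by force
    then show "u = v" using d0(1) by (simp add: mult_le_0_iff)
  qed
  have injB: "inj_on B V"
  proof (rule inj_onI)
    fix u v assume "u \<in> V" "v \<in> V" "B u = B v"
    then have "u - v \<in> V" "B (u - v) = 0" using V(1) subspace_diff B.diff by auto
    then have "\<delta>1 * norm (u - v) \<le> 0" using Blo by force
    then show "u = v" using d1(1) by (simp add: mult_le_0_iff)
  qed
  define U where "U = A ` V"
  define W where "W = B ` V"
  have U: "subspace U" "closed U" "U \<subseteq> subsp x L" "infinite_dimensional U"
  proof -
    show "subspace U" unfolding U_def using A.linear V(1) by (rule linear_subspace_image)
    show "closed U" unfolding U_def using closed_image_bb[OF Abl V(2) V(1) d0(1) Alo] .
    show "U \<subseteq> subsp x L" unfolding U_def subsp_def A_def using pj_closure[OF L(1)] by blast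
    show "infinite_dimensional U" unfolding U_def using infdim_image[OF V(1) V(3) A.linear injA] .
  qed
  have W: "subspace W" "closed W" "W \<subseteq> subsp x (- L)" "infinite_dimensional W"
  proof -
    show "subspace W" unfolding W_def using B.linear V(1) by (rule linear_subspace_image)
    show "closed W" unfolding W_def using closed_image_bb[OF Bbl V(2) V(1) d1(1) Blo] .
    show "W \<subseteq> subsp x (- L)" unfolding W_def subsp_def B_def using pj_closure[OF L(2)] by blast
    show "infinite_dimensional W" unfolding W_def using infdim_image[OF V(1) V(3) B.linear injB] .
  qed
  define T where "T u = B (inv_into V A u)" for u
  have TA: "T (A v) = B v" if "v \<in> V" for v unfolding T_def using inv_into_f_f[OF injA that] by simp
  have h0: "0 < \<delta>1 / C" using d1(1) C1 by simp
  have h1: "bij_betw T U W" unfolding bij_betw_def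
  proof
    show "inj_on T U"
    proof (rule inj_onI)
      fix u1 u2 assume "u1 \<in> U" "u2 \<in> U" "T u1 = T u2"
      then obtain v1 v2 where "v1 \<in> V" "v2 \<in> V" "u1 = A v1" "u2 = A v2" unfolding U_def by blast
      then show "u1 = u2" using \<open>T u1 = T u2\<close> TA injB by (metis inj_onD)
    qed
    show "T ` U = W" unfolding U_def W_def image_image using TA by (simp cong: image_cong)
  qed
  have h2: "\<forall>u1\<in>U. \<forall>u2\<in>U. T (u1 + u2) = T u1 + T u2"
  proof (intro ballI)
    fix u1 u2 assume "u1 \<in> U" "u2 \<in> U"
    then obtain v1 v2 where v: "v1 \<in> V" "v2 \<in> V" "u1 = A v1" "u2 = A v2" unfolding U_def by blast
    have "v1 + v2 \<in> V" using v V(1) subspace_add by blast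
    then show "T (u1 + u2) = T u1 + T u2" using v TA by (simp add: A.add[symmetric] B.add)
  qed
  have h3: "\<forall>u\<in>U. \<forall>r. T (r *\<^sub>R u) = r *\<^sub>R T u"
  proof (intro ballI allI)
    fix u r assume "u \<in> U"
    then obtain v where v: "v \<in> V" "u = A v" unfolding U_def by blast
    have "r *\<^sub>R v \<in> V" using v V(1) subspace_scale by blast
    then show "T (r *\<^sub>R u) = r *\<^sub>R T u" using v TA by (simp add: A.scaleR[symmetric] B.scaleR)
  qed
  have h4: "\<forall>u\<in>U. \<delta>1 / C * norm u \<le> norm (T u) \<and> norm (T u) \<le> C / \<delta>0 * norm u"
  proof
    fix u assume "u \<in> U"
    then obtain v where v: "v \<in> V" "u = A v" unfolding U_def by blast
    have C0: "C > 0" using C1 by simp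
    have "\<delta>1 / C * norm (A v) \<le> \<delta>1 / C * (C * norm v)"
      using Ab[of v] d1(1) C0 by (intro mult_left_mono) auto
    also have "\<dots> = \<delta>1 * norm v" using C0 by simp
    also have "\<dots> \<le> norm (B v)" using Blo[OF v(1)] .
    finally have 1: "\<delta>1 / C * norm u \<le> norm (T u)" using v TA by simp
    have "norm (B v) \<le> C * norm v" by (rule Bb)
    also have "\<dots> = C / \<delta>0 * (\<delta>0 * norm v)" using d0(1) by simp
    also have "\<dots> \<le> C / \<delta>0 * norm (A v)" using Alo[OF v(1)] C0 d0(1) by (intro mult_left_mono) auto
    finally have 2: "norm (T u) \<le> C / \<delta>0 * norm u" using v TA by simp
    show "\<delta>1 / C * norm u \<le> norm (T u) \<and> norm (T u) \<le> C / \<delta>0 * norm u" using 1 2 by blast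
  qed
  have "isomorphic_subspaces U W" unfolding isomorphic_subspaces_def
    using h0 h1 h2 h3 h4 by blast
  moreover have "totally_incomparable (subsp x L) (subsp x (- L))" using inc[OF L] by simp
  ultimately show False using U W unfolding totally_incomparable_def by blast
qed


lemma pj_UNIV: "pj UNIV = (\<lambda>v. v)"
  by (rule ext_basis[OF pj(1) bounded_linear_ident]) (auto simp: pj(3) is_interval_wo_def)

lemma pj_empty: "pj {} = (\<lambda>v. 0)"
  by (rule ext_basis[OF pj(1) bounded_linear_zero]) (auto simp: pj(3) is_interval_wo_def)

lemma SSo_rank1:
  assumes "subspace Y"
  shows "SSo (\<lambda>v. biorth x l v *\<^sub>R x l) Y"
  unfolding SSo_def
proof (intro allI impI)
  fix W and \<delta> :: real
  assume W: "subspace W \<and> closed W \<and> infinite_dimensional W \<and> W \<subseteq> Y" and d: "\<delta> > 0"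
  let ?K = "W \<inter> {v. biorth x l v = 0}"
  have "subspace {v. biorth x l v = 0}"
    by (auto simp: subspace_def linear_0[OF biorth_lin] linear_add[OF biorth_lin] linear_scale[OF biorth_lin])
  then have "subspace ?K" using W by (intro subspace_inter) auto
  moreover have "infinite_dimensional ?K" using W by (intro infdim_ker biorth_lin) auto
  ultimately obtain w where "w \<in> ?K" "norm w = 1" using infdim_unit by blast
  then show "\<exists>w\<in>W. norm w = 1 \<and> norm (biorth x l w *\<^sub>R x l) < \<delta>" using d by auto
qed

lemma main_step:
  assumes Y: "subspace Y" "closed Y" "infinite_dimensional Y"
  shows "\<exists>\<Lambda>. \<Lambda> \<noteq> {} \<and> (\<forall>a b. b \<in> \<Lambda> \<longrightarrow> a \<le> b \<longrightarrow> a \<in> \<Lambda>) \<and>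
     (\<forall>\<beta>\<in>\<Lambda>. \<forall>\<eta>>0. \<exists>v\<in>Y. norm v = 1 \<and> (\<exists>z\<in>span (x ` {\<alpha>\<in>\<Lambda>. \<beta> < \<alpha>}). norm (v - z) < \<eta>))"
proof -
  have iv_atMost: "is_interval_wo {..b}" for b by (rule interval_down) auto
  have iv_lessThan: "is_interval_wo {..<b}" for b by (rule interval_down) auto
  define D where "D = {\<beta>. \<not> SSo (pj {..\<beta>}) Y}"
  define \<Lambda> where "\<Lambda> = (if D = {} then UNIV else {..<(LEAST \<beta>. \<beta> \<in> D)})"
  have down: "\<forall>a b. b \<in> \<Lambda> \<longrightarrow> a \<le> b \<longrightarrow> a \<in> \<Lambda>" unfolding \<Lambda>_def by auto
  have ivL: "is_interval_wo \<Lambda>" using down by (intro interval_down) blast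
  have ivLc: "is_interval_wo (- \<Lambda>)" using down by (intro interval_up) blast
  have smallSS: "SSo (pj {..\<beta>}) Y" if "\<beta> \<in> \<Lambda>" for \<beta>
  proof (cases "D = {}")
    case True then show ?thesis unfolding D_def by blast
  next
    case False
    then have "\<beta> < (LEAST \<beta>. \<beta> \<in> D)" using that unfolding \<Lambda>_def by simp
    then have "\<beta> \<notin> D" using not_less_Least by blast
    then show ?thesis unfolding D_def by blast
  qed
  have notSS: "\<not> SSo (pj \<Lambda>) Y"
  proof (cases "D = {}")
    case True
    then have "\<Lambda> = UNIV" unfolding \<Lambda>_def by simp
    then have "pj \<Lambda> = (\<lambda>v. v)" using pj_UNIV by simp
    then show ?thesis using not_SSo_id[OF Y] by simp
  next
    case False
    define l where "l = (LEAST \<beta>. \<beta> \<in> D)"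
    have "\<exists>\<beta>. \<beta> \<in> D" using False by blast
    then have lD: "l \<in> D" unfolding l_def by (rule LeastI_ex)
    have L: "\<Lambda> = {..<l}" unfolding \<Lambda>_def l_def using False by simp
    show ?thesis
    proof
      assume ss: "SSo (pj \<Lambda>) Y"
      have bl1: "bounded_linear (\<lambda>v. pj {..<l} v + biorth x l v *\<^sub>R x l)"
        by (intro bounded_linear_add pj(1)[OF iv_lessThan] bounded_linear_scaleR_const biorth(1))
      have eq: "pj {..l} = (\<lambda>v. pj {..<l} v + biorth x l v *\<^sub>R x l)"
      proof (rule ext_basis[OF pj(1)[OF iv_atMost] bl1])
        fix \<alpha>
        have a1: "pj {..l} (x \<alpha>) = (if \<alpha> \<le> l then x \<alpha> else 0)" using pj(3)[OF iv_atMost] by simp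
        have a2: "pj {..<l} (x \<alpha>) = (if \<alpha> < l then x \<alpha> else 0)" using pj(3)[OF iv_lessThan] by simp
        have a3: "biorth x l (x \<alpha>) = (if \<alpha> = l then 1 else 0)" using biorth(2) by simp
        show "pj {..l} (x \<alpha>) = pj {..<l} (x \<alpha>) + biorth x l (x \<alpha>) *\<^sub>R x l"
          unfolding a1 a2 a3 by (cases "\<alpha> < l"; cases "\<alpha> = l") (auto simp: not_less less_imp_le leD)
      qed
      have ss2: "SSo (pj {..<l}) Y" using ss L by simp
      have "SSo (\<lambda>v. pj {..<l} v + biorth x l v *\<^sub>R x l) Y"
        using SSo_add[OF pj(1)[OF iv_lessThan] ss2 SSo_rank1[OF Y(1)]] .
      then have "SSo (pj {..l}) Y" using eq by simp
      then show False using lD unfolding D_def by simp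
    qed
  qed
  obtain W \<delta>0 where W: "subspace W" "closed W" "infinite_dimensional W" "W \<subseteq> Y"
    and d0: "\<delta>0 > 0" and Wb: "\<And>w. w \<in> W \<Longrightarrow> norm w = 1 \<Longrightarrow> \<delta>0 \<le> norm (pj \<Lambda> w)"
  proof -
    have "\<exists>W. subspace W \<and> closed W \<and> infinite_dimensional W \<and> W \<subseteq> Y \<and>
      (\<exists>\<delta>>0. \<forall>w\<in>W. norm w = 1 \<longrightarrow> \<delta> \<le> norm (pj \<Lambda> w))"
      using notSS unfolding SSo_def by (simp add: not_less)
    then show ?thesis using that by blast
  qed
  have scale_bound: "\<delta> * norm v \<le> norm (P v)"
    if P: "bounded_linear P" and S: "subspace S" and vS: "v \<in> S"
      and b: "\<And>w. w \<in> S \<Longrightarrow> norm w = 1 \<Longrightarrow> \<delta> \<le> norm (P w)" for P S v and \<delta> :: real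
  proof (cases "v = 0")
    case True then show ?thesis using linear_0[OF bounded_linear.linear[OF P]] by simp
  next
    case False
    have "(1 / norm v) *\<^sub>R v \<in> S" using S vS subspace_scale by blast
    moreover have "norm ((1 / norm v) *\<^sub>R v) = 1" using False by simp
    ultimately have "\<delta> \<le> norm (P ((1 / norm v) *\<^sub>R v))" using b by blast
    also have "\<dots> = norm (P v) / norm v" using False by (simp add: linear_scale[OF bounded_linear.linear[OF P]])
    finally show ?thesis using False by (simp add: field_simps)
  qed
  have W0: "\<delta>0 * norm v \<le> norm (pj \<Lambda> v)" if "v \<in> W" for v
    using scale_bound[OF pj(1)[OF ivL] W(1) that Wb] .
  have Lne: "\<Lambda> \<noteq> {}"
  proof
    assume "\<Lambda> = {}"
    then have z: "pj \<Lambda> w = 0" for w using pj_empty by simp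
    obtain w where "w \<in> W" "norm w = 1" using infdim_unit W(1,3) by blast
    then have "\<delta>0 \<le> 0" using Wb z by force
    then show False using d0 by simp
  qed
  have ssc: "SSo (pj (- \<Lambda>)) W"
  proof (rule ccontr)
    assume "\<not> SSo (pj (- \<Lambda>)) W"
    then obtain V \<delta>1 where V: "subspace V" "closed V" "infinite_dimensional V" "V \<subseteq> W"
      and d1: "\<delta>1 > 0" and Vb: "\<And>w. w \<in> V \<Longrightarrow> norm w = 1 \<Longrightarrow> \<delta>1 \<le> norm (pj (- \<Lambda>) w)"
    proof -
      have "\<exists>V. subspace V \<and> closed V \<and> infinite_dimensional V \<and> V \<subseteq> W \<and>
        (\<exists>\<delta>>0. \<forall>w\<in>V. norm w = 1 \<longrightarrow> \<delta> \<le> norm (pj (- \<Lambda>) w))"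
        using \<open>\<not> SSo (pj (- \<Lambda>)) W\<close> unfolding SSo_def by (simp add: not_less)
      then show ?thesis using that by blast
    qed
    show False
    proof (rule iso_step[OF ivL ivLc V(1-3) d0 _ d1])
      show "\<And>v. v \<in> V \<Longrightarrow> \<delta>0 * norm v \<le> norm (pj \<Lambda> v)" using W0 V(4) by blast
      show "\<And>v. v \<in> V \<Longrightarrow> \<delta>1 * norm v \<le> norm (pj (- \<Lambda>) v)"
        using scale_bound[OF pj(1)[OF ivLc] V(1) _ Vb] by blast
    qed
  qed
  have approx: "\<exists>v\<in>Y. norm v = 1 \<and> (\<exists>z\<in>span (x ` {\<alpha>\<in>\<Lambda>. \<beta> < \<alpha>}). norm (v - z) < \<eta>)"
    if b: "\<beta> \<in> \<Lambda>" and e: "\<eta> > 0" for \<beta> \<eta>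
  proof -
    define M where "M = {\<alpha>\<in>\<Lambda>. \<beta> < \<alpha>}"
    have ivB: "is_interval_wo {\<alpha>. \<beta> < \<alpha>}" by (rule interval_up) (metis mem_Collect_eq less_le_trans)
    have ME: "M = \<Lambda> \<inter> {\<alpha>. \<beta> < \<alpha>}" unfolding M_def by blast
    have ivM: "is_interval_wo M" unfolding ME by (rule interval_Int[OF ivL ivB])
    have sb: "SSo (pj {..\<beta>}) W" using SSo_mono[OF smallSS[OF b] W(4)] .
    have ssum: "SSo (\<lambda>v. pj {..\<beta>} v + pj (- \<Lambda>) v) W" using SSo_add[OF pj(1)[OF iv_atMost] sb ssc] .
    have e2: "\<eta>/2 > 0" using e by simp
    obtain v where v: "v \<in> W" "norm v = 1" "norm (pj {..\<beta>} v + pj (- \<Lambda>) v) < \<eta>/2"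
      using SSoD[OF ssum W(1) W(2) W(3) order_refl e2] by blast
    have id3: "(\<lambda>v. v) = (\<lambda>v. pj {..\<beta>} v + pj M v + pj (- \<Lambda>) v)"
    proof (rule ext_basis[OF bounded_linear_ident])
      show "bounded_linear (\<lambda>v. pj {..\<beta>} v + pj M v + pj (- \<Lambda>) v)"
        by (intro bounded_linear_add pj(1) iv_atMost ivM ivLc)
      fix \<alpha>
      have a1: "pj {..\<beta>} (x \<alpha>) = (if \<alpha> \<le> \<beta> then x \<alpha> else 0)" using pj(3)[OF iv_atMost] by simp
      have a2: "pj M (x \<alpha>) = (if \<alpha> \<in> \<Lambda> \<and> \<beta> < \<alpha> then x \<alpha> else 0)" using pj(3)[OF ivM] by (simp add: M_def)
      have a3: "pj (- \<Lambda>) (x \<alpha>) = (if \<alpha> \<in> \<Lambda> then 0 else x \<alpha>)" using pj(3)[OF ivLc] by simp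
      have "\<alpha> \<le> \<beta> \<Longrightarrow> \<alpha> \<in> \<Lambda>" using down b by blast
      then show "x \<alpha> = pj {..\<beta>} (x \<alpha>) + pj M (x \<alpha>) + pj (- \<Lambda>) (x \<alpha>)"
        unfolding a1 a2 a3 by (cases "\<alpha> \<le> \<beta>"; cases "\<alpha> \<in> \<Lambda>") (auto simp: not_le leD)
    qed
    have "v - pj M v = pj {..\<beta>} v + pj (- \<Lambda>) v"
      using fun_cong[OF id3, of v] by (simp add: algebra_simps)
    then have d1: "norm (v - pj M v) < \<eta>/2" using v by simp
    have "pj M v \<in> closure (span (x ` M))" by (rule pj_closure[OF ivM])
    then have "\<forall>e>0. \<exists>y\<in>span (x ` M). dist y (pj M v) < e" using closure_approachable by blast
    then obtain z where z: "z \<in> span (x ` M)" "dist z (pj M v) < \<eta>/2" using e2 by blast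
    have "v - z = (v - pj M v) + (pj M v - z)" by simp
    then have "norm (v - z) \<le> norm (v - pj M v) + norm (pj M v - z)" by (metis norm_triangle_ineq)
    also have "\<dots> < \<eta>" using d1 z(2) by (simp add: dist_norm norm_minus_commute)
    finally have "norm (v - z) < \<eta>" .
    then show ?thesis using v W(4) z(1) unfolding M_def by blast
  qed
  show ?thesis
    apply (rule exI[of _ \<Lambda>])
    using Lne down approx by blast
qed

end



context tbasis_inc
begin

lemma final:
  assumes Y: "subspace Y" "closed Y" "infinite_dimensional Y" and eps: "\<epsilon> > 0"
  shows "\<exists>y z.
              (\<forall>n. norm (y n) = 1 \<and> norm (z n) = 1 \<and> y n \<in> Y) \<and>
              block_sequence x z \<and>
              summable (\<lambda>n. norm (y n - z n)) \<and>
              (\<Sum>n. norm (y n - z n)) < \<epsilon>"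
proof -
  obtain \<Lambda> where Lne: "\<Lambda> \<noteq> {}" and down: "\<forall>a b. b \<in> \<Lambda> \<longrightarrow> a \<le> b \<longrightarrow> a \<in> \<Lambda>"
    and approx: "\<forall>\<beta>\<in>\<Lambda>. \<forall>\<eta>>0. \<exists>v\<in>Y. norm v = 1 \<and> (\<exists>z\<in>span (x ` {\<alpha>\<in>\<Lambda>. \<beta> < \<alpha>}). norm (v - z) < \<eta>)"
    using main_step[OF Y] by blast
  define Pr where "Pr \<beta> \<eta> p \<longleftrightarrow> fst p \<in> Y \<and> norm (fst p) = 1 \<and> norm (snd p) = 1 \<and>
     finite (supp_b x (snd p)) \<and> supp_b x (snd p) \<noteq> {} \<and> supp_b x (snd p) \<subseteq> {\<alpha>\<in>\<Lambda>. \<beta> < \<alpha>} \<and>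
     norm (fst p - snd p) < \<eta>" for \<beta> \<eta> p
  have stp: "\<exists>p. Pr \<beta> \<eta> p" if b: "\<beta> \<in> \<Lambda>" and e: "\<eta> > 0" for \<beta> \<eta>
  proof -
    define \<eta>' where "\<eta>' = min (\<eta>/2) (1/2)"
    have e': "\<eta>' > 0" using e unfolding \<eta>'_def by simp
    obtain v z0 where v: "v \<in> Y" "norm v = 1" and z0: "z0 \<in> span (x ` {\<alpha>\<in>\<Lambda>. \<beta> < \<alpha>})"
      and d: "norm (v - z0) < \<eta>'"
      using approx b e' by blast
    have "norm v \<le> norm z0 + norm (v - z0)" by (metis add.commute diff_add_cancel norm_triangle_ineq)
    then have nz0: "norm z0 > 1/2" using v d unfolding \<eta>'_def by simp
    then have z0n: "z0 \<noteq> 0" by auto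
    define z where "z = (1 / norm z0) *\<^sub>R z0"
    have zn: "norm z = 1" unfolding z_def using z0n by simp
    have "z0 - z = (1 - 1 / norm z0) *\<^sub>R z0" unfolding z_def by (simp add: algebra_simps)
    then have "norm (z0 - z) = \<bar>1 - 1 / norm z0\<bar> * norm z0" by simp
    also have "\<dots> = \<bar>norm z0 - 1\<bar>"
    proof -
      have np: "norm z0 > 0" using nz0 by linarith
      have "(1 - 1 / norm z0) * norm z0 = norm z0 - 1" using np by (simp add: field_simps)
      moreover have "\<bar>1 - 1 / norm z0\<bar> * norm z0 = \<bar>(1 - 1 / norm z0) * norm z0\<bar>"
        using np by (simp add: abs_mult)
      ultimately show ?thesis by simp
    qed
    also have "\<dots> = \<bar>norm z0 - norm v\<bar>" using v by simp
    also have "\<dots> \<le> norm (z0 - v)" by (rule norm_triangle_ineq3)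
    also have "\<dots> = norm (v - z0)" by (rule norm_minus_commute)
    finally have dz: "norm (z0 - z) \<le> norm (v - z0)" .
    have "v - z = (v - z0) + (z0 - z)" by simp
    then have "norm (v - z) \<le> norm (v - z0) + norm (z0 - z)" by (metis norm_triangle_ineq)
    also have "\<dots> < \<eta>" using dz d unfolding \<eta>'_def by simp
    finally have vz: "norm (v - z) < \<eta>" .
    have sz: "supp_b x z = supp_b x z0" unfolding z_def using z0n by (simp add: supp_scale)
    have "Pr \<beta> \<eta> (v, z)" unfolding Pr_def
      using v zn vz sz supp_span[OF z0] z0n by simp
    then show ?thesis by blast
  qed
  define t where "t n = \<epsilon> / 2 ^ (n + 2)" for n :: nat
  have tpos: "t n > 0" for n unfolding t_def using eps by simp
  define nx where "nx \<beta> n = (SOME p. Pr \<beta> (t n) p)" for \<beta> n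
  obtain \<beta>0 where b0: "\<beta>0 \<in> \<Lambda>" using Lne by blast
  define b where "b = rec_nat \<beta>0 (\<lambda>n \<beta>. Max (supp_b x (snd (nx \<beta> n))))"
  have b0': "b 0 = \<beta>0" and bS: "b (Suc n) = Max (supp_b x (snd (nx (b n) n)))" for n
    unfolding b_def by simp_all
  have inv: "b n \<in> \<Lambda> \<and> Pr (b n) (t n) (nx (b n) n)" for n
  proof (induction n)
    case 0
    have "Pr (b 0) (t 0) (nx (b 0) 0)" unfolding nx_def using stp[OF _ tpos] b0 b0' by (metis someI_ex)
    then show ?case using b0 b0' by simp
  next
    case (Suc n)
    have P: "Pr (b n) (t n) (nx (b n) n)" using Suc by blast
    have "b (Suc n) \<in> supp_b x (snd (nx (b n) n))" unfolding bS
      using P unfolding Pr_def by (intro Max_in) auto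
    then have bL: "b (Suc n) \<in> \<Lambda>" using P unfolding Pr_def by blast
    have "Pr (b (Suc n)) (t (Suc n)) (nx (b (Suc n)) (Suc n))"
      unfolding nx_def using stp[OF bL tpos] by (metis someI_ex)
    then show ?case using bL by simp
  qed
  define y where "y n = fst (nx (b n) n)" for n
  define z where "z n = snd (nx (b n) n)" for n
  have P: "y n \<in> Y" "norm (y n) = 1" "norm (z n) = 1" "finite (supp_b x (z n))" "supp_b x (z n) \<noteq> {}"
     "supp_b x (z n) \<subseteq> {\<alpha>\<in>\<Lambda>. b n < \<alpha>}" "norm (y n - z n) < t n" for n
    using inv[of n] unfolding Pr_def y_def z_def by auto
  have blk: "block_sequence x z" unfolding block_sequence_def
  proof (intro conjI allI)
    fix n
    show "finite (supp_b x (z n))" by (rule P(4))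
    have m: "Max (supp_b x (z n)) = b (Suc n)" unfolding bS z_def by simp
    have "Min (supp_b x (z (Suc n))) \<in> supp_b x (z (Suc n))" using P(4,5) by (rule Min_in)
    then have "b (Suc n) < Min (supp_b x (z (Suc n)))" using P(6)[of "Suc n"] by blast
    then show "Max (supp_b x (z n)) < Min (supp_b x (z (Suc n)))" using m by simp
  qed
  define g where "g n = \<epsilon> / 4 * (1/2) ^ n" for n :: nat
  have tg: "t n = g n" for n unfolding t_def g_def by (simp add: power_add power_one_over field_simps)
  have gs: "g sums (\<epsilon> / 4 * 2)"
  proof -
    have "(\<lambda>n. (1/2::real) ^ n) sums (1 / (1 - 1/2))" by (rule geometric_sums) simp
    then have "(\<lambda>n. \<epsilon> / 4 * (1/2::real) ^ n) sums (\<epsilon> / 4 * (1 / (1 - 1/2)))" by (rule sums_mult)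
    then show ?thesis unfolding g_def by simp
  qed
  have le: "norm (y n - z n) \<le> g n" for n using P(7)[of n] tg[of n] by simp
  have sg: "summable g" using gs sums_summable by blast
  have sf: "summable (\<lambda>n. norm (y n - z n))"
    by (rule summable_comparison_test[OF _ sg]) (use le in auto)
  have "(\<Sum>n. norm (y n - z n)) \<le> (\<Sum>n. g n)" by (rule suminf_le[OF le sf sg])
  also have "\<dots> = \<epsilon> / 4 * 2" using gs sums_unique by metis
  also have "\<dots> < \<epsilon>" using eps by simp
  finally have "(\<Sum>n. norm (y n - z n)) < \<epsilon>" .
  then show ?thesis using P(1-3) blk sf by blast
qed

end

theorem mainTheorem13:
  fixes x :: "'i::wellorder \<Rightarrow> 'a::banach"
  assumes "transfinite_basis x"
    and "\<And>I J. is_interval_wo I \<Longrightarrow> is_interval_wo J \<Longrightarrow> I \<inter> J = {} \<Longrightarrow>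
            totally_incomparable (subsp x I) (subsp x J)"
  shows "\<forall>Y. subspace Y \<and> closed Y \<and> infinite_dimensional Y \<longrightarrow>
           (\<forall>\<epsilon>>0. \<exists>y z :: nat \<Rightarrow> 'a.
              (\<forall>n. norm (y n) = 1 \<and> norm (z n) = 1 \<and> y n \<in> Y) \<and>
              block_sequence x z \<and>
              summable (\<lambda>n. norm (y n - z n)) \<and>
              (\<Sum>n. norm (y n - z n)) < \<epsilon>)"
proof -
  obtain C where nz: "\<forall>\<alpha>. x \<alpha> \<noteq> 0" and dn: "closure (span (range x)) = UNIV" and C1: "C \<ge> 1"
    and pr: "\<forall>I. is_interval_wo I \<longrightarrow>
        (\<exists>P. bounded_linear P \<and> (\<forall>v. P (P v) = P v) \<and> (\<forall>v. norm (P v) \<le> C * norm v) \<and>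
             (\<forall>F c. finite F \<longrightarrow>
                 P (\<Sum>\<alpha>\<in>F. c \<alpha> *\<^sub>R x \<alpha>) = (\<Sum>\<alpha>\<in>F \<inter> I. c \<alpha> *\<^sub>R x \<alpha>)))"
    using assms(1) unfolding transfinite_basis_def by blast
  interpret tbasis_inc x C
    by unfold_locales (use nz dn C1 pr assms(2) in auto)
  show ?thesis using final by blast
qed


end
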